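(* For $\lambda>1$ let $\mu:=\sqrt{1-\lambda^{-2}}$ and define on $(-1,\mu^{-1}-1)$ $$\gamma_\lambda(\varepsilon):=\frac{(1+\mu(1+\varepsilon))^{1+\mu(1+\varepsilon)}}{(1-\mu(1+\varepsilon))^{1-\mu(1+\varepsilon)}}\cdot\frac{(1-\mu)^{1-\mu}}{(1+\mu)^{1+\mu}}\left(\frac{\lambda}{e}\right)^{2\mu\varepsilon}.$$ Let $\lambda_0>1$. Then there are constants $c_0,c_1,c_2>0$ depending only on $\lambda_0$ such that for every $\lambda\ge\lambda_0$: (i) for every $\varepsilon$ with $|\varepsilon|\lambda^2\le c_0$ one has $1-c_1\lambda^2\varepsilon^2\le\gamma_\lambda(\varepsilon)\le1-c_2\lambda^2\varepsilon^2$; (ii) $\gamma_\lambda$ is monotone increasing on $(-1,0)$ and monotone decreasing on $(0,\mu^{-1}-1)$; (iii) $0<\gamma_\lambda(\varepsilon)\le1-\frac{c_2}{c_0}\lambda^{-2}$ for all $\varepsilon\in(-1,\mu^{-1}-1)\setminus(-c_0\lambda^{-2},c_0\lambda^{-2})$. *)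

theory Defs
  imports Complex_Main
begin

definition mu_of :: "real \<Rightarrow> real" where
  "mu_of lam = sqrt (1 - lam powr (-2))"

definition gamma :: "real \<Rightarrow> real \<Rightarrow> real" where
  "gamma lam \<epsilon> =
     (let \<mu> = mu_of lam; a = 1 + \<mu> * (1 + \<epsilon>); b = 1 - \<mu> * (1 + \<epsilon>) in
      (a powr a / b powr b) * ((1 - \<mu>) powr (1 - \<mu>) / (1 + \<mu>) powr (1 + \<mu>))
        * (lam / exp 1) powr (2 * \<mu> * \<epsilon>))"

end

theory Submission
  imports Defs
begin

lemma mu_props:
  assumes "lam > 1"
  shows "0 < mu_of lam" "mu_of lam < 1" "(mu_of lam)^2 = 1 - 1/lam^2"
proof -
  have p: "lam powr (-2) = 1/lam^2" using assms
    by (simp add: powr_minus powr_realpow divide_inverse)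
  have "lam^2 > 1" using assms by (simp add: one_less_power)
  hence q: "0 < 1/lam^2" "1/lam^2 < 1" using divide_less_eq_1[of 1 "lam^2"] by auto
  show "0 < mu_of lam" unfolding mu_of_def p using q by simp
  show "mu_of lam < 1" unfolding mu_of_def p using q by simp
  show "(mu_of lam)^2 = 1 - 1/lam^2" unfolding mu_of_def p using q by simp
qed

lemma mu_mono:
  assumes "1 < lam0" "lam0 \<le> lam"
  shows "mu_of lam0 \<le> mu_of lam"
proof -
  have "lam0^2 \<le> lam^2" using assms by (intro power_mono) auto
  moreover have "0 < lam0^2" using assms by simp
  ultimately have "1/lam^2 \<le> 1/lam0^2"
    by (simp add: frac_le)
  hence "(mu_of lam0)^2 \<le> (mu_of lam)^2"
    using mu_props(3)[of lam0] mu_props(3)[of lam] assms by simp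
  moreover have "0 \<le> mu_of lam" using mu_props(1)[of lam] assms by simp
  ultimately show ?thesis by (rule power2_le_imp_le)
qed

definition G :: "real \<Rightarrow> real \<Rightarrow> real" where
  "G lam e = (let m = mu_of lam; a = 1 + m * (1 + e); b = 1 - m * (1 + e) in
     a * ln a - b * ln b + ((1 - m) * ln (1 - m) - (1 + m) * ln (1 + m)) + 2 * m * e * (ln lam - 1))"

definition D :: "real \<Rightarrow> real \<Rightarrow> real" where
  "D lam s = mu_of lam * ln (1 - (lam^2 - 1) * (2*s + s^2))"

lemma gamma_exp:
  assumes "lam > 1" "-1 < e" "mu_of lam * (1 + e) < 1"
  shows "gamma lam e = exp (G lam e)"
proof -
  define m where "m = mu_of lam"
  have m: "0 < m" "m < 1" using mu_props assms m_def by auto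
  have a: "0 < 1 + m*(1+e)" using m assms by (simp add: add_pos_pos)
  have b: "0 < 1 - m*(1+e)" using assms m_def by simp
  have l: "ln (lam / exp 1) = ln lam - 1" using assms by (simp add: ln_div)
  have e1: "(1 + m*(1+e)) powr (1 + m*(1+e)) = exp ((1 + m*(1+e)) * ln (1 + m*(1+e)))"
    using a by (simp add: powr_def mult.commute)
  have e2: "(1 - m*(1+e)) powr (1 - m*(1+e)) = exp ((1 - m*(1+e)) * ln (1 - m*(1+e)))"
    using b by (simp add: powr_def mult.commute)
  have e3: "(1 - m) powr (1 - m) = exp ((1 - m) * ln (1 - m))"
    using m by (simp add: powr_def mult.commute)
  have e4: "(1 + m) powr (1 + m) = exp ((1 + m) * ln (1 + m))"
    using m by (simp add: powr_def mult.commute)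
  have e5: "(lam / exp 1) powr (2 * m * e) = exp (2 * m * e * (ln lam - 1))"
    using assms by (simp add: powr_def l mult.commute)
  have "gamma lam e = exp ((1 + m*(1+e)) * ln (1 + m*(1+e))) / exp ((1 - m*(1+e)) * ln (1 - m*(1+e)))
      * (exp ((1 - m) * ln (1 - m)) / exp ((1 + m) * ln (1 + m))) * exp (2 * m * e * (ln lam - 1))"
    unfolding gamma_def Let_def m_def[symmetric] e1 e2 e3 e4 e5 by simp
  also have "... = exp (G lam e)"
    unfolding G_def Let_def m_def[symmetric] exp_add exp_diff by simp
  finally show ?thesis .
qed

lemma G0: "lam > 1 \<Longrightarrow> G lam 0 = 0"
  unfolding G_def Let_def by simp

lemma arg_eq:
  assumes "lam > 1"
  shows "lam^2 * ((1 + mu_of lam * (1 + s)) * (1 - mu_of lam * (1 + s))) = 1 - (lam^2 - 1) * (2*s + s^2)"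
proof -
  define m where "m = mu_of lam"
  have m2: "m^2 = 1 - 1/lam^2" using mu_props(3)[OF assms] m_def by simp
  have "lam^2 * m^2 = lam^2 - 1" using m2 assms by (simp add: field_simps)
  hence "lam^2 * ((1 + m * (1 + s)) * (1 - m * (1 + s))) = lam^2 - (lam^2 * m^2) * (1+s)^2"
    by (simp add: algebra_simps power2_eq_square)
  also have "... = lam^2 - (lam^2 - 1) * (1+s)^2"
    using \<open>lam^2 * m^2 = lam^2 - 1\<close> by simp
  also have "... = 1 - (lam^2 - 1) * (2*s + s^2)"
    by (simp add: algebra_simps power2_eq_square)
  finally show ?thesis unfolding m_def .
qed

lemma arg_pos:
  assumes "lam > 1" "-1 < s" "mu_of lam * (1 + s) < 1"
  shows "0 < 1 - (lam^2 - 1) * (2*s + s^2)"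
proof -
  have "0 < 1 + mu_of lam * (1 + s)" using mu_props(1)[OF assms(1)] assms by (simp add: add_pos_pos)
  moreover have "0 < 1 - mu_of lam * (1 + s)" using assms by simp
  ultimately show ?thesis using arg_eq[OF assms(1), of s] assms by (metis mult_pos_pos zero_less_power zero_less_one less_trans)
qed

lemma G_deriv:
  assumes "lam > 1" "-1 < s" "mu_of lam * (1 + s) < 1"
  shows "(G lam has_real_derivative D lam s) (at s)"
proof -
  define m where "m = mu_of lam"
  have m: "0 < m" "m < 1" using mu_props assms m_def by auto
  have a: "0 < 1 + m*(1+s)" using m assms by (simp add: add_pos_pos)
  have b: "0 < 1 - m*(1+s)" using assms m_def by simp
  have eq: "G lam = (\<lambda>e. (1 + m*(1+e)) * ln (1 + m*(1+e)) - (1 - m*(1+e)) * ln (1 - m*(1+e))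
     + ((1 - m) * ln (1 - m) - (1 + m) * ln (1 + m)) + 2 * m * e * (ln lam - 1))"
    unfolding G_def Let_def m_def by (rule ext) simp
  have d: "((\<lambda>e. (1 + m*(1+e)) * ln (1 + m*(1+e)) - (1 - m*(1+e)) * ln (1 - m*(1+e))
     + ((1 - m) * ln (1 - m) - (1 + m) * ln (1 + m)) + 2 * m * e * (ln lam - 1))
     has_real_derivative (m * ln (1 + m*(1+s)) + m + (m * ln (1 - m*(1+s)) + m) + 2 * m * (ln lam - 1))) (at s)"
    using a b by (auto intro!: derivative_eq_intros)
  have "m * ln (1 + m*(1+s)) + m + (m * ln (1 - m*(1+s)) + m) + 2 * m * (ln lam - 1)
      = m * (ln (1 + m*(1+s)) + ln (1 - m*(1+s)) + ln (lam^2))"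
    using assms by (simp add: ln_realpow algebra_simps)
  also have "... = m * ln (lam^2 * ((1 + m*(1+s)) * (1 - m*(1+s))))"
    using a b assms by (simp add: ln_mult)
  also have "... = D lam s" unfolding D_def m_def arg_eq[OF assms(1)] ..
  finally show ?thesis using d eq by simp
qed

lemma L_eq: "lam > 1 \<Longrightarrow> lam^2 - 1 = (mu_of lam)^2 * lam^2"
  using mu_props(3)[of lam] by (simp add: field_simps)

lemma D_nonneg:
  assumes "lam > 1" "-1 < s" "s < 0"
  shows "0 \<le> D lam s"
proof -
  have "lam^2 > 1" using assms by (simp add: one_less_power)
  have "s * (2 + s) < 0" using assms by (intro mult_neg_pos) auto
  hence "2*s + s^2 < 0" by (simp add: power2_eq_square algebra_simps)
  hence "(lam^2 - 1) * (2*s + s^2) \<le> 0" using \<open>lam^2 > 1\<close> by (simp add: mult_nonneg_nonpos)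
  hence "0 \<le> ln (1 - (lam^2 - 1) * (2*s + s^2))" by simp
  thus ?thesis unfolding D_def using mu_props(1)[OF assms(1)] by simp
qed

lemma D_nonpos:
  assumes "lam > 1" "0 < s" "mu_of lam * (1 + s) < 1"
  shows "D lam s \<le> 0"
proof -
  have "lam^2 > 1" using assms by (simp add: one_less_power)
  have "2*s + s^2 > 0" using assms by (simp add: add_pos_nonneg)
  hence "(lam^2 - 1) * (2*s + s^2) \<ge> 0" using \<open>lam^2 > 1\<close> by simp
  moreover have "0 < 1 - (lam^2 - 1) * (2*s + s^2)" using arg_pos[of lam s] assms by simp
  ultimately have "ln (1 - (lam^2 - 1) * (2*s + s^2)) \<le> 0" by simp
  thus ?thesis unfolding D_def using mu_props(1)[OF assms(1)] by (simp add: mult_nonneg_nonpos)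
qed

lemma B1:
  assumes "lam > 1" "0 \<le> s" "s * lam^2 \<le> 1/4"
  shows "D lam s \<le> - 2 * (mu_of lam)^3 * lam^2 * s"
proof -
  define m where "m = mu_of lam"
  define u where "u = (lam^2 - 1) * (2*s + s^2)"
  have m: "0 < m" "m < 1" using mu_props assms m_def by auto
  have L: "lam^2 - 1 = m^2 * lam^2" using L_eq[OF assms(1)] m_def by simp
  have "lam^2 > 1" using assms by (simp add: one_less_power)
  have "s * 1 \<le> s * lam^2" using assms \<open>lam^2 > 1\<close> by (intro mult_left_mono) auto
  hence s1: "s \<le> 1/4" using assms by linarith
  have u1: "u \<ge> (lam^2 - 1) * (2*s)" unfolding u_def using \<open>lam^2 > 1\<close> assms
    by (intro mult_left_mono) auto
  have u2: "u \<le> lam^2 * s * (9/4)"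
  proof -
    have "(lam^2 - 1) * (2*s + s^2) \<le> lam^2 * (2*s + s^2)" using assms by (intro mult_right_mono) auto
    also have "... = lam^2 * s * (2 + s)" by (simp add: algebra_simps power2_eq_square)
    also have "... \<le> lam^2 * s * (9/4)" using s1 assms by (intro mult_left_mono) auto
    finally show ?thesis unfolding u_def .
  qed
  have "lam^2 * s \<le> 1/4" using assms(3) by (simp add: mult.commute)
  hence "u < 1" using u2 by linarith
  have "ln (1 - u) \<le> - u" using ln_le_minus_one[of "1-u"] \<open>u < 1\<close> by simp
  hence "m * ln (1 - u) \<le> m * (- u)" using m by (intro mult_left_mono) auto
  also have "... \<le> m * (- ((lam^2 - 1) * (2*s)))" using u1 m by (intro mult_left_mono) auto
  also have "... = - 2 * m^3 * lam^2 * s" unfolding L by (simp add: algebra_simps power3_eq_cube power2_eq_square)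
  finally show ?thesis unfolding D_def m_def u_def .
qed

lemma B2:
  assumes "lam > 1" "0 \<le> s" "s * lam^2 \<le> 1/4"
  shows "D lam s \<ge> - 6 * lam^2 * s"
proof -
  define m where "m = mu_of lam"
  define u where "u = (lam^2 - 1) * (2*s + s^2)"
  have m: "0 < m" "m < 1" using mu_props assms m_def by auto
  have "lam^2 > 1" using assms by (simp add: one_less_power)
  have "s * 1 \<le> s * lam^2" using assms \<open>lam^2 > 1\<close> by (intro mult_left_mono) auto
  hence s1: "s \<le> 1/4" using assms by linarith
  have u0: "u \<ge> 0" unfolding u_def using \<open>lam^2 > 1\<close> assms by simp
  have u2: "u \<le> lam^2 * s * (9/4)"
  proof -
    have "(lam^2 - 1) * (2*s + s^2) \<le> lam^2 * (2*s + s^2)" using assms by (intro mult_right_mono) auto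
    also have "... = lam^2 * s * (2 + s)" by (simp add: algebra_simps power2_eq_square)
    also have "... \<le> lam^2 * s * (9/4)" using s1 assms by (intro mult_left_mono) auto
    finally show ?thesis unfolding u_def .
  qed
  have u3: "u \<le> 9/16" using u2 assms by (simp add: mult.commute)
  have "ln (1 / (1 - u)) \<le> 1 / (1 - u) - 1" using ln_le_minus_one[of "1/(1-u)"] u3 by simp
  hence "- ln (1 - u) \<le> u / (1 - u)" using u3 by (simp add: ln_div field_simps)
  also have "u / (1 - u) \<le> u / (7/16)" using u0 u3 by (intro divide_left_mono) auto
  also have "... \<le> 6 * lam^2 * s"
  proof -
    have "0 \<le> lam^2 * s" using assms by simp
    moreover have "\<And>x::real. u \<le> x * (9/4) \<Longrightarrow> 0 \<le> x \<Longrightarrow> u / (7/16) \<le> 6 * x" by simp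
    ultimately have "u / (7/16) \<le> 6 * (lam^2 * s)" using u2 by blast
    thus ?thesis by (simp add: mult.assoc)
  qed
  finally have l: "ln (1 - u) \<ge> - 6 * lam^2 * s" by simp
  have "ln (1 - u) \<le> 0" using u0 u3 by simp
  hence "(1 - m) * ln (1 - u) \<le> 0" using m by (intro mult_nonneg_nonpos) auto
  hence "m * ln (1 - u) \<ge> ln (1 - u)" by (simp add: algebra_simps)
  thus ?thesis using l unfolding D_def m_def u_def by simp
qed

lemma B3:
  assumes "lam > 1" "s \<le> 0" "- s * lam^2 \<le> 1/4"
  shows "D lam s \<ge> (mu_of lam)^3 * lam^2 * (- s)"
proof -
  define m where "m = mu_of lam"
  define v where "v = (lam^2 - 1) * (- s) * (2 + s)"
  have m: "0 < m" "m < 1" using mu_props assms m_def by auto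
  have L: "lam^2 - 1 = m^2 * lam^2" using L_eq[OF assms(1)] m_def by simp
  have "lam^2 > 1" using assms by (simp add: one_less_power)
  have "(-s) * 1 \<le> (-s) * lam^2" using assms \<open>lam^2 > 1\<close> by (intro mult_left_mono) auto
  hence s1: "- s \<le> 1/4" using assms by linarith
  have "0 \<le> (lam^2 - 1) * (- s)" using \<open>lam^2 > 1\<close> assms by (intro mult_nonneg_nonneg) auto
  hence v0: "v \<ge> (lam^2 - 1) * (- s) * (7/4)" unfolding v_def using s1
    by (intro mult_left_mono) auto
  have v1: "v \<le> lam^2 * (- s) * 2"
  proof -
    have "(lam^2-1)*(-s) \<le> lam^2*(-s)" using assms by (intro mult_right_mono) auto
    hence "v \<le> lam^2 * (- s) * (2 + s)" unfolding v_def
      by (rule mult_right_mono) (use s1 in auto)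
    also have "... \<le> lam^2 * (- s) * 2"
      using assms mult_nonneg_nonneg[of "lam^2" "-s"] by (intro mult_left_mono) auto
    finally show ?thesis .
  qed
  have vv: "v \<le> 1/2" using v1 assms by (simp add: mult.commute)
  have vp: "v \<ge> 0" using v0 \<open>0 \<le> (lam^2 - 1) * (- s)\<close> by linarith
  have arg: "1 - (lam^2 - 1) * (2*s + s^2) = 1 + v" unfolding v_def by (simp add: algebra_simps power2_eq_square)
  have "ln (1 / (1 + v)) \<le> 1 / (1 + v) - 1" using ln_le_minus_one[of "1/(1+v)"] vp by simp
  hence "v / (1 + v) \<le> ln (1 + v)" using vp by (simp add: ln_div field_simps)
  moreover have "v / (3/2) \<le> v / (1 + v)" using vp vv by (intro divide_left_mono) auto
  ultimately have "v / (3/2) \<le> ln (1 + v)" by (rule order_trans[rotated])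
  hence "(2/3) * v \<le> ln (1 + v)" by simp
  moreover have "(2/3) * ((lam^2 - 1) * (- s) * (7/4)) \<le> (2/3) * v" using v0 by (intro mult_left_mono) auto
  ultimately have l: "ln (1 + v) \<ge> (2/3) * ((lam^2 - 1) * (- s) * (7/4))" by linarith
  have X: "0 \<le> m^2 * lam^2 * (- s)" using assms by (intro mult_nonneg_nonneg) auto
  have "(2/3) * ((lam^2 - 1) * (- s) * (7/4)) = (7/6) * (m^2 * lam^2 * (- s))"
    unfolding L by (simp add: algebra_simps)
  hence "(2/3) * ((lam^2 - 1) * (- s) * (7/4)) \<ge> m^2 * lam^2 * (- s)" using X by linarith
  hence l2: "ln (1 + v) \<ge> m^2 * lam^2 * (- s)" using l by linarith
  have "m * ln (1 + v) \<ge> m * (m^2 * lam^2 * (- s))" using l2 m by (intro mult_left_mono) auto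
  thus ?thesis unfolding D_def m_def[symmetric] arg by (simp add: power3_eq_cube power2_eq_square algebra_simps)
qed

lemma B4:
  assumes "lam > 1" "s \<le> 0" "- s * lam^2 \<le> 1/4"
  shows "D lam s \<le> - 2 * lam^2 * s"
proof -
  define m where "m = mu_of lam"
  define v where "v = (lam^2 - 1) * (- s) * (2 + s)"
  have m: "0 < m" "m < 1" using mu_props assms m_def by auto
  have "lam^2 > 1" using assms by (simp add: one_less_power)
  have "(-s) * 1 \<le> (-s) * lam^2" using assms \<open>lam^2 > 1\<close> by (intro mult_left_mono) auto
  hence s1: "- s \<le> 1/4" using assms by linarith
  have v1: "v \<le> lam^2 * (- s) * 2"
  proof -
    have "(lam^2-1)*(-s) \<le> lam^2*(-s)" using assms by (intro mult_right_mono) auto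
    hence "v \<le> lam^2 * (- s) * (2 + s)" unfolding v_def
      by (rule mult_right_mono) (use s1 in auto)
    also have "... \<le> lam^2 * (- s) * 2"
      using assms mult_nonneg_nonneg[of "lam^2" "-s"] by (intro mult_left_mono) auto
    finally show ?thesis .
  qed
  have vp: "v \<ge> 0" unfolding v_def using \<open>lam^2 > 1\<close> assms s1
    by (intro mult_nonneg_nonneg) auto
  have arg: "1 - (lam^2 - 1) * (2*s + s^2) = 1 + v" unfolding v_def by (simp add: algebra_simps power2_eq_square)
  have l: "ln (1 + v) \<le> v" using ln_le_minus_one[of "1+v"] vp by simp
  have "ln (1 + v) \<ge> 0" using vp by simp
  hence "m * ln (1 + v) \<le> ln (1 + v)" using m by (intro mult_left_le_one_le) auto
  thus ?thesis using l v1 unfolding D_def m_def[symmetric] arg by (simp add: algebra_simps)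
qed

lemma small_dom:
  assumes "lam > 1" "\<bar>s\<bar> * lam^2 \<le> 1/4"
  shows "-1 < s" "mu_of lam * (1 + s) < 1"
proof -
  define m where "m = mu_of lam"
  define d where "d = 1 / (4 * lam^2)"
  have m: "0 < m" "m < 1" using mu_props assms m_def by auto
  have "lam^2 > 1" using assms by (simp add: one_less_power)
  have "\<bar>s\<bar> * 1 \<le> \<bar>s\<bar> * lam^2" using \<open>lam^2 > 1\<close> by (intro mult_left_mono) auto
  hence s1: "\<bar>s\<bar> \<le> 1/4" using assms by linarith
  thus "-1 < s" by linarith
  have d0: "0 < d" unfolding d_def using \<open>lam^2 > 1\<close> assms(1) by simp
  have m2: "m^2 = 1 - 4*d" unfolding d_def using mu_props(3)[OF assms(1)] m_def by simp
  have "s * (4 * lam^2) \<le> \<bar>s\<bar> * (4 * lam^2)" by (intro mult_right_mono) auto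
  also have "... \<le> 1" using assms(2) by simp
  finally have "s \<le> d" unfolding d_def using \<open>lam^2 > 1\<close> by (subst pos_le_divide_eq) auto
  have "(m * (1 + d))^2 = m^2 * (1+d)^2" by (rule power_mult_distrib)
  also have "... = (1 - 4*d) * (1+d)^2" by (simp only: m2)
  also have "... = 1 - d * (2 + 7*d + 4*d^2)" by (simp add: algebra_simps power2_eq_square)
  also have "... < 1"
  proof -
    have "0 \<le> 4*d^2" by simp
    hence "0 < 2 + 7*d + 4*d^2" using d0 by linarith
    hence "0 < d * (2 + 7*d + 4*d^2)" using d0 by (intro mult_pos_pos) auto
    thus ?thesis by linarith
  qed
  finally have "(m * (1 + d))^2 < 1^2" by simp
  hence "m * (1 + d) < 1" by (rule power_less_imp_less_base) simp
  moreover have "m * (1 + s) \<le> m * (1 + d)" using \<open>s \<le> d\<close> m by (intro mult_left_mono) auto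
  ultimately show "mu_of lam * (1 + s) < 1" unfolding m_def by linarith
qed

lemma h_deriv:
  assumes "lam > 1" "-1 < s" "mu_of lam * (1 + s) < 1"
  shows "((\<lambda>x. G lam x + c * x^2) has_real_derivative D lam s + c * (2 * s)) (at s)"
proof -
  have "((\<lambda>x. c * x^2) has_real_derivative c * (2 * s)) (at s)" by (auto intro!: derivative_eq_intros)
  from DERIV_add[OF G_deriv[OF assms] this] show ?thesis .
qed

lemma G_bounds:
  assumes "1 < lam0" "lam0 \<le> lam" "\<bar>e\<bar> * lam^2 \<le> 1/4"
  shows "- 3 * lam^2 * e^2 \<le> G lam e" "G lam e \<le> - ((mu_of lam0)^3 / 2) * lam^2 * e^2"
proof -
  define m0 where "m0 = mu_of lam0"
  define m where "m = mu_of lam"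
  have lam: "lam > 1" using assms by linarith
  have m0: "0 < m0" "m0 \<le> m" using mu_props(1)[OF assms(1)] mu_mono[OF assms(1,2)] m0_def m_def by auto
  have m03: "m0^3 \<le> m^3" using m0 by (intro power_mono) auto
  have dom: "-1 < s" "mu_of lam * (1 + s) < 1" if "\<bar>s\<bar> \<le> \<bar>e\<bar>" for s
  proof -
    have "\<bar>s\<bar> * lam^2 \<le> \<bar>e\<bar> * lam^2" using that by (intro mult_right_mono) auto
    hence "\<bar>s\<bar> * lam^2 \<le> 1/4" using assms by linarith
    thus "-1 < s" "mu_of lam * (1 + s) < 1" using small_dom[OF lam, of s] by auto
  qed
  have G0': "G lam 0 = 0" using G0 lam by simp
  have "- 3 * lam^2 * e^2 \<le> G lam e \<and> G lam e \<le> - (m0^3 / 2) * lam^2 * e^2"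
  proof (cases "e \<ge> 0")
    case True
    have sm: "s * lam^2 \<le> 1/4" if "0 \<le> s" "s \<le> e" for s
    proof -
      have "s * lam^2 \<le> e * lam^2" using that by (intro mult_right_mono) auto
      moreover have "\<bar>e\<bar> = e" using True by simp
      ultimately show ?thesis using assms(3) by linarith
    qed
    have h1: "G lam 0 + (m0^3 * lam^2) * 0^2 \<ge> G lam e + (m0^3 * lam^2) * e^2"
    proof (rule DERIV_nonpos_imp_nonincreasing[OF True])
      fix s assume s: "0 \<le> s" "s \<le> e"
      have ds: "-1 < s" "mu_of lam * (1 + s) < 1" using dom[of s] s by auto
      have b: "D lam s \<le> - 2 * m^3 * lam^2 * s" using B1[OF lam s(1) sm[OF s]] m_def by simp
      have "m0^3 * (lam^2 * s) \<le> m^3 * (lam^2 * s)" using m03 s by (intro mult_right_mono) auto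
      hence "D lam s + m0^3 * lam^2 * (2 * s) \<le> 0" using b by (simp add: algebra_simps)
      thus "\<exists>y. ((\<lambda>x. G lam x + (m0^3 * lam^2) * x^2) has_real_derivative y) (at s) \<and> y \<le> 0"
        using h_deriv[OF lam ds, of "m0^3 * lam^2"] by (intro exI[of _ "D lam s + m0^3 * lam^2 * (2 * s)"]) simp
    qed
    have h2: "G lam 0 + (3 * lam^2) * 0^2 \<le> G lam e + (3 * lam^2) * e^2"
    proof (rule DERIV_nonneg_imp_nondecreasing[OF True])
      fix s assume s: "0 \<le> s" "s \<le> e"
      have ds: "-1 < s" "mu_of lam * (1 + s) < 1" using dom[of s] s by auto
      have b: "D lam s \<ge> - 6 * lam^2 * s" using B2[OF lam s(1) sm[OF s]] by simp
      hence "D lam s + 3 * lam^2 * (2 * s) \<ge> 0" by (simp add: algebra_simps)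
      thus "\<exists>y. ((\<lambda>x. G lam x + (3 * lam^2) * x^2) has_real_derivative y) (at s) \<and> y \<ge> 0"
        using h_deriv[OF lam ds, of "3 * lam^2"] by (intro exI[of _ "D lam s + 3 * lam^2 * (2 * s)"]) simp
    qed
    define X where "X = lam^2 * e^2"
    have X0: "0 \<le> X" unfolding X_def by simp
    have e1: "(m0^3 * lam^2) * e^2 = m0^3 * X" "(3 * lam^2) * e^2 = 3 * X"
      "- 3 * lam^2 * e^2 = - 3 * X" "- (m0^3 / 2) * lam^2 * e^2 = - (m0^3 / 2) * X"
      unfolding X_def by (simp_all add: algebra_simps)
    have "0 \<le> m0^3 * X" using m0 X0 by simp
    thus ?thesis using h1 h2 G0' unfolding e1 by simp
  next
    case False
    hence F: "e \<le> 0" by simp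
    have sm: "- s * lam^2 \<le> 1/4" if "e \<le> s" "s \<le> 0" for s
    proof -
      have "(- s) * lam^2 \<le> (- e) * lam^2" using that by (intro mult_right_mono) auto
      moreover have "(- e) * lam^2 \<le> 1/4" using assms(3) F by (simp only: abs_of_nonpos)
      ultimately show ?thesis by linarith
    qed
    have h3: "G lam e + (m0^3 / 2 * lam^2) * e^2 \<le> G lam 0 + (m0^3 / 2 * lam^2) * 0^2"
    proof (rule DERIV_nonneg_imp_nondecreasing[OF F])
      fix s assume s: "e \<le> s" "s \<le> 0"
      have ds: "-1 < s" "mu_of lam * (1 + s) < 1" using dom[of s] s by auto
      have b: "D lam s \<ge> m^3 * lam^2 * (- s)" using B3[OF lam s(2) sm[OF s]] m_def by simp
      have "0 \<le> lam^2 * (-s)" using s by (intro mult_nonneg_nonneg) auto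
      hence "m0^3 * (lam^2 * (-s)) \<le> m^3 * (lam^2 * (-s))" using m03 by (intro mult_right_mono) auto
      hence "D lam s + m0^3 / 2 * lam^2 * (2 * s) \<ge> 0" using b by (simp add: algebra_simps)
      thus "\<exists>y. ((\<lambda>x. G lam x + (m0^3 / 2 * lam^2) * x^2) has_real_derivative y) (at s) \<and> y \<ge> 0"
        using h_deriv[OF lam ds, of "m0^3 / 2 * lam^2"] by (intro exI[of _ "D lam s + m0^3 / 2 * lam^2 * (2 * s)"]) simp
    qed
    have h4: "G lam e + lam^2 * e^2 \<ge> G lam 0 + lam^2 * 0^2"
    proof (rule DERIV_nonpos_imp_nonincreasing[OF F])
      fix s assume s: "e \<le> s" "s \<le> 0"
      have ds: "-1 < s" "mu_of lam * (1 + s) < 1" using dom[of s] s by auto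
      have b: "D lam s \<le> - 2 * lam^2 * s" using B4[OF lam s(2) sm[OF s]] by simp
      hence "D lam s + lam^2 * (2 * s) \<le> 0" by (simp add: algebra_simps)
      thus "\<exists>y. ((\<lambda>x. G lam x + lam^2 * x^2) has_real_derivative y) (at s) \<and> y \<le> 0"
        using h_deriv[OF lam ds, of "lam^2"] by (intro exI[of _ "D lam s + lam^2 * (2 * s)"]) simp
    qed
    define X where "X = lam^2 * e^2"
    have X0: "0 \<le> X" unfolding X_def by simp
    have e1: "(m0^3 / 2 * lam^2) * e^2 = (m0^3 / 2) * X" "lam^2 * e^2 = X"
      "- 3 * lam^2 * e^2 = - 3 * X" "- (m0^3 / 2) * lam^2 * e^2 = - (m0^3 / 2) * X"
      unfolding X_def by (simp_all add: algebra_simps)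
    show ?thesis using h3 h4 G0' X0 unfolding e1 by simp
  qed
  thus "- 3 * lam^2 * e^2 \<le> G lam e" "G lam e \<le> - ((mu_of lam0)^3 / 2) * lam^2 * e^2"
    unfolding m0_def by auto
qed

lemma exp_neg_le: fixes y :: real assumes "0 \<le> y" "y \<le> 1" shows "exp (- y) \<le> 1 - y / 2"
proof -
  have "1 + y \<le> exp y" using exp_ge_add_one_self[of y] by simp
  hence "exp (- y) \<le> 1 / (1 + y)" using assms by (simp add: exp_minus field_simps)
  also have "... \<le> 1 - y / 2"
  proof -
    have "1 \<le> (1 - y/2) * (1 + y)" using assms by (simp add: algebra_simps power2_eq_square) (smt (verit) mult_left_le_one_le)
    thus ?thesis using assms by (simp add: divide_le_eq)
  qed
  finally show ?thesis .
qed

lemma gamma_bounds: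
  assumes "1 < lam0" "lam0 \<le> lam" "\<bar>e\<bar> * lam^2 \<le> 1/4"
  shows "1 - 3 * lam^2 * e^2 \<le> gamma lam e" "gamma lam e \<le> 1 - ((mu_of lam0)^3 / 4) * lam^2 * e^2"
proof -
  define m0 where "m0 = mu_of lam0"
  have lam: "lam > 1" using assms by linarith
  have m0: "0 < m0" "m0 < 1" using mu_props[OF assms(1)] m0_def by auto
  have dom: "-1 < e" "mu_of lam * (1 + e) < 1" using small_dom[OF lam assms(3)] by auto
  have ge: "gamma lam e = exp (G lam e)" using gamma_exp[OF lam dom] .
  define X where "X = lam^2 * e^2"
  have X0: "0 \<le> X" unfolding X_def by simp
  have "lam^2 * 1 \<le> lam^2 * lam^2" using lam by (intro mult_left_mono) (auto simp: one_le_power)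
  have "\<bar>e\<bar> * 1 \<le> \<bar>e\<bar> * lam^2" using lam by (intro mult_left_mono) (auto simp: one_le_power)
  hence e4: "\<bar>e\<bar> \<le> 1/4" using assms(3) by linarith
  have "X = (\<bar>e\<bar> * lam^2) * \<bar>e\<bar>" unfolding X_def by (simp add: power2_eq_square algebra_simps)
  also have "... \<le> (1/4) * (1/4)" using assms(3) e4 by (intro mult_mono) auto
  finally have X1: "X \<le> 1/16" by simp
  have gb: "- 3 * X \<le> G lam e" "G lam e \<le> - (m0^3 / 2) * X"
    using G_bounds[OF assms] unfolding X_def m0_def by (simp_all add: algebra_simps)
  have "1 + G lam e \<le> exp (G lam e)" using exp_ge_add_one_self[of "G lam e"] by simp
  hence "1 - 3 * X \<le> gamma lam e" using gb ge by linarith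
  thus "1 - 3 * lam^2 * e^2 \<le> gamma lam e" unfolding X_def by (simp add: algebra_simps)
  have m3: "0 < m0^3" "m0^3 \<le> 1" using m0 by (auto simp: power_le_one)
  have y: "0 \<le> (m0^3 / 2) * X" "(m0^3 / 2) * X \<le> 1"
  proof -
    show "0 \<le> (m0^3 / 2) * X" using m3 X0 by simp
    have "(m0^3 / 2) * X \<le> 1 * 1" using m3 X0 X1 by (intro mult_mono) auto
    thus "(m0^3 / 2) * X \<le> 1" by simp
  qed
  have "gamma lam e \<le> exp (- ((m0^3 / 2) * X))" using gb ge by simp
  also have "... \<le> 1 - ((m0^3 / 2) * X) / 2" by (rule exp_neg_le[OF y])
  also have "... = 1 - (m0^3 / 4) * lam^2 * e^2" unfolding X_def by (simp add: algebra_simps)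
  finally show "gamma lam e \<le> 1 - ((mu_of lam0)^3 / 4) * lam^2 * e^2" unfolding m0_def .
qed

lemma gamma_mono:
  assumes "lam > 1"
  shows "mono_on {-1<..<0} (gamma lam)"
proof (rule mono_onI)
  fix r s :: real assume rs: "r \<in> {-1<..<0}" "s \<in> {-1<..<0}" "r \<le> s"
  have m: "0 < mu_of lam" "mu_of lam < 1" using mu_props[OF assms] by auto
  have dom: "-1 < x" "mu_of lam * (1 + x) < 1" if "x \<in> {-1<..<0}" for x
  proof -
    show "-1 < x" using that by simp
    have "mu_of lam * (1 + x) \<le> mu_of lam * 1" using that m by (intro mult_left_mono) auto
    thus "mu_of lam * (1 + x) < 1" using m by linarith
  qed
  have "G lam r \<le> G lam s"
  proof (rule DERIV_nonneg_imp_nondecreasing[OF rs(3)])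
    fix x assume x: "r \<le> x" "x \<le> s"
    hence xi: "x \<in> {-1<..<0}" using rs by auto
    show "\<exists>y. (G lam has_real_derivative y) (at x) \<and> 0 \<le> y"
      using G_deriv[OF assms dom[OF xi]] D_nonneg[OF assms, of x] xi by auto
  qed
  thus "gamma lam r \<le> gamma lam s" using gamma_exp[OF assms dom[OF rs(1)]] gamma_exp[OF assms dom[OF rs(2)]] by simp
qed

lemma gamma_antimono:
  assumes "lam > 1"
  shows "antimono_on {0<..<1 / mu_of lam - 1} (gamma lam)"
proof (rule monotone_onI)
  fix r s :: real assume rs: "r \<in> {0<..<1 / mu_of lam - 1}" "s \<in> {0<..<1 / mu_of lam - 1}" "r \<le> s"
  have m: "0 < mu_of lam" "mu_of lam < 1" using mu_props[OF assms] by auto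
  have dom: "-1 < x" "mu_of lam * (1 + x) < 1" if "x \<in> {0<..<1 / mu_of lam - 1}" for x
  proof -
    show "-1 < x" using that by simp
    have "1 + x < 1 / mu_of lam" using that by simp
    thus "mu_of lam * (1 + x) < 1" using m by (simp add: less_divide_eq mult.commute)
  qed
  have "G lam s \<le> G lam r"
  proof (rule DERIV_nonpos_imp_nonincreasing[OF rs(3)])
    fix x assume x: "r \<le> x" "x \<le> s"
    hence xi: "x \<in> {0<..<1 / mu_of lam - 1}" using rs by auto
    show "\<exists>y. (G lam has_real_derivative y) (at x) \<and> y \<le> 0"
      using G_deriv[OF assms dom[OF xi]] D_nonpos[OF assms _ dom(2)[OF xi]] xi by auto
  qed
  thus "(\<lambda>x y. y \<le> x) (gamma lam r) (gamma lam s)" using gamma_exp[OF assms dom[OF rs(1)]] gamma_exp[OF assms dom[OF rs(2)]] by simp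
qed

theorem lemmaA3:
  fixes lam0 :: real
  assumes "lam0 > 1"
  shows "\<exists>c0 c1 c2 :: real. c0 > 0 \<and> c1 > 0 \<and> c2 > 0 \<and>
    (\<forall>lam. lam \<ge> lam0 \<longrightarrow>
      (\<forall>\<epsilon>. \<epsilon> \<in> {-1<..<1 / mu_of lam - 1} \<and> \<bar>\<epsilon>\<bar> * lam^2 \<le> c0 \<longrightarrow>
          1 - c1 * lam^2 * \<epsilon>^2 \<le> gamma lam \<epsilon> \<and> gamma lam \<epsilon> \<le> 1 - c2 * lam^2 * \<epsilon>^2)
      \<and> mono_on {-1<..<0} (gamma lam)
      \<and> antimono_on {0<..<1 / mu_of lam - 1} (gamma lam)
      \<and> (\<forall>\<epsilon>. \<epsilon> \<in> {-1<..<1 / mu_of lam - 1} - {-c0 / lam^2<..<c0 / lam^2} \<longrightarrow>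
          0 < gamma lam \<epsilon> \<and> gamma lam \<epsilon> \<le> 1 - (c2 / c0) / lam^2))"
proof -
  define m0 where "m0 = mu_of lam0"
  have m0: "0 < m0" using mu_props[OF assms] m0_def by auto
  define c2 where "c2 = m0^3 / 256"
  have c2: "c2 > 0" unfolding c2_def using m0 by simp
  have c2c0: "c2 / (1/4) = (m0^3 / 4) * (1/16)" unfolding c2_def by simp
  have main: "(\<forall>lam. lam \<ge> lam0 \<longrightarrow>
         (\<forall>\<epsilon>. \<epsilon> \<in> {-1<..<1 / mu_of lam - 1} \<and> \<bar>\<epsilon>\<bar> * lam^2 \<le> (1/4) \<longrightarrow>
             1 - 3 * lam^2 * \<epsilon>^2 \<le> gamma lam \<epsilon> \<and> gamma lam \<epsilon> \<le> 1 - c2 * lam^2 * \<epsilon>^2)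
         \<and> mono_on {-1<..<0} (gamma lam)
         \<and> antimono_on {0<..<1 / mu_of lam - 1} (gamma lam)
         \<and> (\<forall>\<epsilon>. \<epsilon> \<in> {-1<..<1 / mu_of lam - 1} - {-(1/4) / lam^2<..<(1/4) / lam^2} \<longrightarrow>
             0 < gamma lam \<epsilon> \<and> gamma lam \<epsilon> \<le> 1 - (c2 / (1/4)) / lam^2))" (is "\<forall>lam. _ \<longrightarrow> ?P lam")
  proof (rule allI, rule impI)
    fix lam assume lam0: "lam0 \<le> lam"
    have lam: "lam > 1" using lam0 assms by linarith
    have m: "0 < mu_of lam" "mu_of lam < 1" using mu_props[OF lam] by auto
    have bnd: "1 - 3 * lam^2 * e^2 \<le> gamma lam e \<and> gamma lam e \<le> 1 - c2 * lam^2 * e^2"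
      if "\<bar>e\<bar> * lam^2 \<le> 1/4" for e
    proof -
      have b: "1 - 3 * lam^2 * e^2 \<le> gamma lam e" "gamma lam e \<le> 1 - (m0^3 / 4) * lam^2 * e^2"
        using gamma_bounds[OF assms lam0 that] m0_def by auto
      have "c2 * (lam^2 * e^2) \<le> (m0^3 / 4) * (lam^2 * e^2)" unfolding c2_def using m0
        by (intro mult_right_mono) auto
      thus ?thesis using b by (simp add: algebra_simps)
    qed
    have P1: "\<forall>e. e \<in> {-1<..<1 / mu_of lam - 1} \<and> \<bar>e\<bar> * lam^2 \<le> 1/4 \<longrightarrow>
          1 - 3 * lam^2 * e^2 \<le> gamma lam e \<and> gamma lam e \<le> 1 - c2 * lam^2 * e^2"
      using bnd by blast
    have P2: "mono_on {-1<..<0} (gamma lam)" by (rule gamma_mono[OF lam])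
    have P3: "antimono_on {0<..<1 / mu_of lam - 1} (gamma lam)" by (rule gamma_antimono[OF lam])
    have P4: "\<forall>e. e \<in> {-1<..<1 / mu_of lam - 1} - {-(1/4) / lam^2<..<(1/4) / lam^2} \<longrightarrow>
          0 < gamma lam e \<and> gamma lam e \<le> 1 - (c2 / (1/4)) / lam^2"
    proof (intro allI impI conjI)
      fix e assume e: "e \<in> {-1<..<1 / mu_of lam - 1} - {-(1/4) / lam^2<..<(1/4) / lam^2}"
      have dom: "-1 < e" "mu_of lam * (1 + e) < 1"
      proof -
        show "-1 < e" using e by simp
        have "1 + e < 1 / mu_of lam" using e by simp
        thus "mu_of lam * (1 + e) < 1" using m by (simp add: less_divide_eq mult.commute)
      qed
      show "0 < gamma lam e" using gamma_exp[OF lam dom] by simp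
      define e0 where "e0 = (1/4) / lam^2"
      have lp: "0 < lam^2" using lam by simp
      have e0p: "0 < e0" unfolding e0_def using lp by simp
      have e0a: "\<bar>e0\<bar> * lam^2 \<le> 1/4" "\<bar>-e0\<bar> * lam^2 \<le> 1/4" unfolding e0_def using lp by auto
      have val: "1 - (m0^3 / 4) * lam^2 * e0^2 = 1 - (c2 / (1/4)) / lam^2"
        unfolding c2c0 e0_def using lp by (simp add: field_simps power2_eq_square)
      have g0: "gamma lam e0 \<le> 1 - (c2 / (1/4)) / lam^2" "gamma lam (-e0) \<le> 1 - (c2 / (1/4)) / lam^2"
        using gamma_bounds(2)[OF assms lam0 e0a(1)] gamma_bounds(2)[OF assms lam0 e0a(2)] val m0_def
        by (auto simp: mult.commute)
      have "e \<le> -e0 \<or> e0 \<le> e" using e unfolding e0_def by auto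
      thus "gamma lam e \<le> 1 - (c2 / (1/4)) / lam^2"
      proof
        assume "e \<le> -e0"
        moreover have "-e0 \<in> {-1<..<0}" using small_dom(1)[OF lam e0a(2)] e0p by auto
        moreover have "e \<in> {-1<..<0}" using e \<open>e \<le> -e0\<close> e0p by auto
        ultimately have "gamma lam e \<le> gamma lam (-e0)" using mono_onD[OF gamma_mono[OF lam]] by blast
        thus ?thesis using g0 by linarith
      next
        assume "e0 \<le> e"
        moreover have "e0 \<in> {0<..<1 / mu_of lam - 1}"
        proof -
          have "mu_of lam * (1 + e0) < 1" using small_dom(2)[OF lam e0a(1)] .
          hence "1 + e0 < 1 / mu_of lam" using m by (simp add: less_divide_eq mult.commute)
          thus ?thesis using e0p by simp
        qed
        moreover have "e \<in> {0<..<1 / mu_of lam - 1}" using e \<open>e0 \<le> e\<close> e0p by auto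
        ultimately have "gamma lam e \<le> gamma lam e0" using gamma_antimono[OF lam]
          by (auto simp: monotone_on_def)
        thus ?thesis using g0 by linarith
      qed
    qed
    show "?P lam" using P1 P2 P3 P4 by blast
  qed
  have "0 < (1/4::real) \<and> 0 < (3::real) \<and> 0 < c2 \<and> (\<forall>lam. lam \<ge> lam0 \<longrightarrow>
         (\<forall>\<epsilon>. \<epsilon> \<in> {-1<..<1 / mu_of lam - 1} \<and> \<bar>\<epsilon>\<bar> * lam^2 \<le> (1/4) \<longrightarrow>
             1 - 3 * lam^2 * \<epsilon>^2 \<le> gamma lam \<epsilon> \<and> gamma lam \<epsilon> \<le> 1 - c2 * lam^2 * \<epsilon>^2)
         \<and> mono_on {-1<..<0} (gamma lam)
         \<and> antimono_on {0<..<1 / mu_of lam - 1} (gamma lam)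
         \<and> (\<forall>\<epsilon>. \<epsilon> \<in> {-1<..<1 / mu_of lam - 1} - {-(1/4) / lam^2<..<(1/4) / lam^2} \<longrightarrow>
             0 < gamma lam \<epsilon> \<and> gamma lam \<epsilon> \<le> 1 - (c2 / (1/4)) / lam^2))"
    apply (intro conjI)
       apply simp
      apply simp
     apply (rule c2)
    apply (rule main)
    done
  thus ?thesis by blast
qed

end
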